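(* Let $\mathfrak g=\mathfrak k+_\rho V$ be the semidirect sum of a finite-dimensional real Lie algebra $\mathfrak k$ and a commutative ideal $V$ via a representation $\rho:\mathfrak k\to\operatorname{End}(V)$. Let $f_1,\dots,f_l$ be polynomials on $\mathfrak g^*$ each satisfying $f_i(M,v)=f_i(M+L,v)$ for all $(M,v)\in\mathfrak g^*$ and $L\in\mathrm{St}_{\rho^*}(v)^\perp$, and write $f_i(M,v)=f_{i,v}(\pi_v(M))$. Suppose that for generic $v\in V^*$ the functions $f_{1,v},\dots,f_{l,v}$ pairwise commute with respect to the Lie–Poisson bracket on $\mathrm{St}_{\rho^*}(v)^*$ and form a complete commutative set in $S(\mathrm{St}_{\rho^*}(v))$. Then $\{f_1,\dots,f_l\}\cup V$ (elements of $V$ viewed as linear functions on $\mathfrak g^*$) is a complete commutative set in $S(\mathfrak g)$.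
   Context: Elements of $\mathfrak g^*=\mathfrak k^*\oplus V^*$ are pairs $(M,v)$. $\rho^*:\mathfrak k\to\operatorname{End}(V^* )$ is the dual representation, $\mathrm{St}_{\rho^*}(v)=\{X\in\mathfrak k\mid\rho^*(X)v=0\}$, $\mathrm{St}_{\rho^*}(v)^\perp\subset\mathfrak k^*$ its annihilator, $\pi_v:\mathfrak k^*\to\mathrm{St}_{\rho^*}(v)^*$ restriction. For a Lie algebra $\mathfrak l$, $S(\mathfrak l)$ is the polynomial algebra on $\mathfrak l^*$ with Lie–Poisson bracket $\{f,g\}(x)=\langle x,[df(x),dg(x)]\rangle$, and $\Phi_x(\xi,\eta)=\langle x,[\xi,\eta]\rangle$. A set of polynomials in $S(\mathfrak l)$ is a complete commutative set if its elements pairwise Poisson-commute and, at generic $x\in\mathfrak l^*$, their differentials span a maximal $\Phi_x$-isotropic subspace of $\mathfrak l$ (equivalently, they generate a subalgebra of transcendence degree $\frac12(\dim\mathfrak l+\operatorname{ind}\mathfrak l)$, where $\operatorname{ind}\mathfrak l$ is the generic corank of $\Phi_x$). *)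

theory Defs
  imports "HOL-Analysis.Analysis"
begin

text \<open>Conventions: finite-dimensional real vector spaces are euclidean_space types;
 duals are identified with the spaces themselves via the inner product
 (pairing of M in k* with X in k is M \<bullet> X).\<close>

definition lie_algebra :: "('k::euclidean_space \<Rightarrow> 'k \<Rightarrow> 'k) \<Rightarrow> bool" where
  "lie_algebra br \<longleftrightarrow> bilinear br \<and> (\<forall>x. br x x = 0) \<and>
     (\<forall>x y z. br x (br y z) + br y (br z x) + br z (br x y) = 0)"

definition lie_rep :: "('k::euclidean_space \<Rightarrow> 'k \<Rightarrow> 'k) \<Rightarrow> ('k \<Rightarrow> 'v::euclidean_space \<Rightarrow> 'v) \<Rightarrow> bool" where
  "lie_rep br \<rho> \<longleftrightarrow> (\<forall>a. linear (\<lambda>X. \<rho> X a)) \<and> (\<forall>X. linear (\<rho> X)) \<and>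
     (\<forall>X Y a. \<rho> (br X Y) a = \<rho> X (\<rho> Y a) - \<rho> Y (\<rho> X a))"

definition sd_br :: "('k::euclidean_space \<Rightarrow> 'k \<Rightarrow> 'k) \<Rightarrow> ('k \<Rightarrow> 'v::euclidean_space \<Rightarrow> 'v)
     \<Rightarrow> 'k \<times> 'v \<Rightarrow> 'k \<times> 'v \<Rightarrow> 'k \<times> 'v" where
  "sd_br br \<rho> x y = (br (fst x) (fst y), \<rho> (fst x) (snd y) - \<rho> (fst y) (snd x))"

definition dual_rep :: "('k::euclidean_space \<Rightarrow> 'v::euclidean_space \<Rightarrow> 'v) \<Rightarrow> 'k \<Rightarrow> 'v \<Rightarrow> 'v" where
  "dual_rep \<rho> X = (\<lambda>v. - adjoint (\<rho> X) v)"

definition stab :: "('k::euclidean_space \<Rightarrow> 'v::euclidean_space \<Rightarrow> 'v) \<Rightarrow> 'v \<Rightarrow> 'k set" where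
  "stab \<rho> v = {X. dual_rep \<rho> X v = 0}"

definition annihilator :: "'k::euclidean_space set \<Rightarrow> 'k set" where
  "annihilator S = {L. \<forall>X\<in>S. L \<bullet> X = 0}"

text \<open>Differential df(x), as an element of the Lie algebra (gradient).\<close>
definition grad :: "('a::euclidean_space \<Rightarrow> real) \<Rightarrow> 'a \<Rightarrow> 'a" where
  "grad f x = (\<Sum>b\<in>Basis. frechet_derivative f (at x) b *\<^sub>R b)"

definition lp_bracket :: "('a::euclidean_space \<Rightarrow> 'a \<Rightarrow> 'a) \<Rightarrow> ('a \<Rightarrow> real) \<Rightarrow> ('a \<Rightarrow> real) \<Rightarrow> 'a \<Rightarrow> real" where
  "lp_bracket br f g x = x \<bullet> br (grad f x) (grad g x)"

definition generic_on :: "'a::euclidean_space set \<Rightarrow> ('a \<Rightarrow> bool) \<Rightarrow> bool" where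
  "generic_on L P \<longleftrightarrow> (\<exists>p::'a \<Rightarrow> real. polynomial_function p \<and> (\<exists>y\<in>L. p y \<noteq> 0) \<and>
      (\<forall>y\<in>L. p y \<noteq> 0 \<longrightarrow> P y))"

definition isotropic :: "('a::euclidean_space \<Rightarrow> 'a \<Rightarrow> 'a) \<Rightarrow> 'a \<Rightarrow> 'a set \<Rightarrow> bool" where
  "isotropic br x W \<longleftrightarrow> (\<forall>\<xi>\<in>W. \<forall>\<eta>\<in>W. x \<bullet> br \<xi> \<eta> = 0)"

definition maximal_isotropic :: "('a::euclidean_space \<Rightarrow> 'a \<Rightarrow> 'a) \<Rightarrow> 'a set \<Rightarrow> 'a \<Rightarrow> 'a set \<Rightarrow> bool" where
  "maximal_isotropic br L x W \<longleftrightarrow> subspace W \<and> W \<subseteq> L \<and> isotropic br x W \<and>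
     (\<forall>U. subspace U \<and> W \<subseteq> U \<and> U \<subseteq> L \<and> isotropic br x U \<longrightarrow> U = W)"

text \<open>Complete commutative set in S(l), where l = L is a Lie subalgebra (subspace) of the
 ambient algebra with bracket br, and l* is identified with L via the inner product.
 Functions on l* are represented by their pull-backs along the orthogonal projection onto L.\<close>
definition complete_comm_set :: "('a::euclidean_space \<Rightarrow> 'a \<Rightarrow> 'a) \<Rightarrow> 'a set \<Rightarrow> ('a \<Rightarrow> real) set \<Rightarrow> bool" where
  "complete_comm_set br L F \<longleftrightarrow>
     (\<forall>f\<in>F. polynomial_function f) \<and>
     (\<forall>f\<in>F. \<forall>g\<in>F. \<forall>x\<in>L. lp_bracket br f g x = 0) \<and>
     generic_on L (\<lambda>x. maximal_isotropic br L x (span ((\<lambda>f. grad f x) ` F)))"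

end

theory Submission
  imports Defs "Jordan_Normal_Form.Determinant"
begin



lemma rpf_deriv:
  fixes p :: "'a::euclidean_space \<Rightarrow> real"
  assumes "real_polynomial_function p"
  shows "\<exists>D. (\<forall>x. (p has_derivative D x) (at x)) \<and> (\<forall>h. real_polynomial_function (\<lambda>x. D x h))"
  using assms
proof (induction p rule: real_polynomial_function.induct)
  case (linear f)
  show ?case
    by (rule exI[of _ "\<lambda>x. f"]) (auto intro: bounded_linear_imp_has_derivative linear)
next
  case (const c)
  show ?case by (rule exI[of _ "\<lambda>x h. 0"]) auto
next
  case (add f g)
  then obtain D1 D2 where "\<forall>x. (f has_derivative D1 x) (at x)" "\<forall>h. real_polynomial_function (\<lambda>x. D1 x h)"
    "\<forall>x. (g has_derivative D2 x) (at x)" "\<forall>h. real_polynomial_function (\<lambda>x. D2 x h)" by blast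
  then show ?case
    by (intro exI[of _ "\<lambda>x h. D1 x h + D2 x h"]) (auto intro!: has_derivative_add)
next
  case (mult f g)
  then obtain D1 D2 where "\<forall>x. (f has_derivative D1 x) (at x)" "\<forall>h. real_polynomial_function (\<lambda>x. D1 x h)"
    "\<forall>x. (g has_derivative D2 x) (at x)" "\<forall>h. real_polynomial_function (\<lambda>x. D2 x h)" by blast
  then show ?case
  proof (intro exI[of _ "\<lambda>x h. f x * D2 x h + D1 x h * g x"] conjI allI)
    fix x show "((\<lambda>x. f x * g x) has_derivative (\<lambda>h. f x * D2 x h + D1 x h * g x)) (at x)"
      using \<open>\<forall>x. (f has_derivative D1 x) (at x)\<close> \<open>\<forall>x. (g has_derivative D2 x) (at x)\<close>
      by (auto intro!: has_derivative_mult)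
  next
    fix h show "real_polynomial_function (\<lambda>x. f x * D2 x h + D1 x h * g x)"
      using \<open>\<forall>h. real_polynomial_function (\<lambda>x. D1 x h)\<close> \<open>\<forall>h. real_polynomial_function (\<lambda>x. D2 x h)\<close> mult.hyps
      by (intro real_polynomial_function.intros(3,4)) auto
  qed
qed

lemma linear_rep_inner:
  fixes D :: "'a::euclidean_space \<Rightarrow> real"
  assumes "linear D"
  shows "D h = (\<Sum>b\<in>Basis. D b *\<^sub>R b) \<bullet> h"
proof -
  have "D h = D (\<Sum>b\<in>Basis. (h \<bullet> b) *\<^sub>R b)" by (simp add: euclidean_representation)
  also have "\<dots> = (\<Sum>b\<in>Basis. (h \<bullet> b) * D b)"
    using assms by (simp add: linear_sum linear_scale)
  also have "\<dots> = (\<Sum>b\<in>Basis. D b *\<^sub>R b) \<bullet> h"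
    by (simp add: inner_sum_left inner_sum_right mult.commute inner_commute)
  finally show ?thesis .
qed

lemma grad_poly:
  fixes f :: "'a::euclidean_space \<Rightarrow> real"
  assumes "polynomial_function f"
  shows "polynomial_function (grad f) \<and> (\<forall>x. (f has_derivative (\<lambda>h. grad f x \<bullet> h)) (at x))"
proof -
  obtain D where D: "\<forall>x. (f has_derivative D x) (at x)" "\<forall>h. real_polynomial_function (\<lambda>x. D x h)"
    using rpf_deriv assms real_polynomial_function_eq by blast
  have fd: "frechet_derivative f (at x) = D x" for x
    using D(1) frechet_derivative_at by metis
  have g: "grad f x = (\<Sum>b\<in>Basis. D x b *\<^sub>R b)" for x
    by (simp add: grad_def fd)
  have "polynomial_function (\<lambda>x. \<Sum>b\<in>Basis. D x b *\<^sub>R b)"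
    using D(2) by (intro polynomial_function_sum) (auto simp: real_polynomial_function_eq)
  moreover have "(f has_derivative (\<lambda>h. grad f x \<bullet> h)) (at x)" for x
  proof -
    have "linear (D x)" using D(1) has_derivative_linear by blast
    then have "D x = (\<lambda>h. grad f x \<bullet> h)"
    proof (intro ext)
      fix h assume "linear (D x)" then show "D x h = grad f x \<bullet> h" unfolding g by (rule linear_rep_inner)
    qed
    then show ?thesis using D(1) by metis
  qed
  moreover have "grad f = (\<lambda>x. \<Sum>b\<in>Basis. D x b *\<^sub>R b)" using g by (rule ext)
  ultimately show ?thesis by simp
qed

lemma grad_unique:
  fixes g :: "'a::euclidean_space \<Rightarrow> real"
  assumes "(g has_derivative (\<lambda>h. a \<bullet> h)) (at x)"
  shows "grad g x = a"
proof -
  have "frechet_derivative g (at x) = (\<lambda>h. a \<bullet> h)" using frechet_derivative_at assms by metis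
  then have "grad g x = (\<Sum>b\<in>Basis. (a \<bullet> b) *\<^sub>R b)" by (simp add: grad_def)
  then show ?thesis by (simp add: euclidean_representation)
qed

lemma poly_zero_dense:
  fixes g q :: "'a::euclidean_space \<Rightarrow> real"
  assumes g: "polynomial_function g" and q: "polynomial_function q" and y: "q y \<noteq> 0"
    and gz: "\<And>z. q z \<noteq> 0 \<Longrightarrow> g z = 0"
  shows "g z = 0"
proof -
  define LL where "LL = (\<lambda>t::real. z + t *\<^sub>R (y - z))"
  have pl: "polynomial_function LL"
    unfolding LL_def by (intro polynomial_function_add polynomial_function_mult) auto
  have "real_polynomial_function (g \<circ> LL)" using g pl
    by (simp add: real_polynomial_function_eq polynomial_function_compose)
  then obtain a n where a: "g \<circ> LL = (\<lambda>t. \<Sum>i\<le>n. a i * t^i)"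
    using real_polynomial_function_iff_sum by blast
  have "real_polynomial_function (q \<circ> LL)" using q pl
    by (simp add: real_polynomial_function_eq polynomial_function_compose)
  then obtain c m where c: "q \<circ> LL = (\<lambda>t. \<Sum>i\<le>m. c i * t^i)"
    using real_polynomial_function_iff_sum by blast
  have "LL 1 = y" by (simp add: LL_def)
  then have "(\<Sum>i\<le>m. c i * 1^i) \<noteq> 0" using y fun_cong[OF c, of 1] by simp
  then have "\<exists>k. k \<le> m \<and> c k \<noteq> 0" by (auto intro: ccontr)
  then have fin: "finite {t. (\<Sum>i\<le>m. c i * t^i) = 0}" using polyfun_finite_roots by blast
  have sub: "{t. (\<Sum>i\<le>m. c i * t^i) \<noteq> 0} \<subseteq> {t::real. (\<Sum>i\<le>n. a i * t^i) = 0}"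
  proof
    fix t assume "t \<in> {t. (\<Sum>i\<le>m. c i * t^i) \<noteq> 0}"
    then have "q (LL t) \<noteq> 0" using fun_cong[OF c, of t] by simp
    then have "g (LL t) = 0" by (rule gz)
    then show "t \<in> {t::real. (\<Sum>i\<le>n. a i * t^i) = 0}" using fun_cong[OF a, of t] by simp
  qed
  have "infinite {t::real. (\<Sum>i\<le>m. c i * t^i) \<noteq> 0}"
  proof
    assume "finite {t::real. (\<Sum>i\<le>m. c i * t^i) \<noteq> 0}"
    with fin have "finite ({t. (\<Sum>i\<le>m. c i * t^i) = 0} \<union> {t::real. (\<Sum>i\<le>m. c i * t^i) \<noteq> 0})" by blast
    moreover have "({t. (\<Sum>i\<le>m. c i * t^i) = 0} \<union> {t::real. (\<Sum>i\<le>m. c i * t^i) \<noteq> 0}) = UNIV" by blast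
    ultimately show False by (simp add: infinite_UNIV_char_0)
  qed
  then have "infinite {t::real. (\<Sum>i\<le>n. a i * t^i) = 0}" using sub finite_subset by blast
  then have "\<forall>k. k \<le> n \<longrightarrow> a k = 0" using polyfun_finite_roots by blast
  then have "(\<Sum>i\<le>n. a i * 0^i) = 0" by simp
  moreover have "LL 0 = z" by (simp add: LL_def)
  ultimately show ?thesis using fun_cong[OF a, of 0] by simp
qed




lemma poly_times:
  fixes f g :: "'x::real_normed_vector \<Rightarrow> real"
  shows "polynomial_function f \<Longrightarrow> polynomial_function g \<Longrightarrow> polynomial_function (\<lambda>x. f x * g x)"
  using polynomial_function_mult[of f g] by simp

lemma bilinear_inner': "bilinear (\<lambda>x y::'a::real_inner. x \<bullet> y)"
  unfolding bilinear_def by (auto intro!: linearI simp: inner_add_left inner_add_right)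

lemma poly_bilin:
  fixes B :: "'a::euclidean_space \<Rightarrow> 'b::euclidean_space \<Rightarrow> 'c::euclidean_space"
    and f :: "'x::euclidean_space \<Rightarrow> 'a" and g :: "'x \<Rightarrow> 'b"
  assumes B: "bilinear B" and f: "polynomial_function f" and g: "polynomial_function g"
  shows "polynomial_function (\<lambda>x. B (f x) (g x))"
proof -
  have eq: "B (f x) (g x) = (\<Sum>(b,c)\<in>Basis \<times> Basis. ((f x \<bullet> b) * (g x \<bullet> c)) *\<^sub>R B b c)" for x
  proof -
    have "B (f x) (g x) = B (\<Sum>b\<in>Basis. (f x \<bullet> b) *\<^sub>R b) (\<Sum>c\<in>Basis. (g x \<bullet> c) *\<^sub>R c)"
      by (simp add: euclidean_representation)
    also have "\<dots> = (\<Sum>(b,c)\<in>Basis \<times> Basis. B ((f x \<bullet> b) *\<^sub>R b) ((g x \<bullet> c) *\<^sub>R c))"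
      by (rule bilinear_sum[OF B])
    also have "\<dots> = (\<Sum>(b,c)\<in>Basis \<times> Basis. ((f x \<bullet> b) * (g x \<bullet> c)) *\<^sub>R B b c)"
      by (intro sum.cong refl) (auto simp: bilinear_lmul[OF B] bilinear_rmul[OF B])
    finally show ?thesis .
  qed
  have "polynomial_function (\<lambda>x. \<Sum>(b,c)\<in>Basis \<times> Basis. ((f x \<bullet> b) * (g x \<bullet> c)) *\<^sub>R B b c)"
  proof (intro polynomial_function_sum)
    fix i :: "'a \<times> 'b"
    show "polynomial_function (\<lambda>x. case i of (b,c) \<Rightarrow> ((f x \<bullet> b) * (g x \<bullet> c)) *\<^sub>R B b c)"
      using f g by (cases i) (auto intro!: polynomial_function_mult poly_times polynomial_function_inner)
  qed auto
  then show ?thesis using eq by simp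
qed

lemma poly_inner:
  fixes f g :: "'x::euclidean_space \<Rightarrow> 'a::euclidean_space"
  shows "polynomial_function f \<Longrightarrow> polynomial_function g \<Longrightarrow> polynomial_function (\<lambda>x. f x \<bullet> g x)"
  by (rule poly_bilin[OF bilinear_inner'])

lemma gram_cert:
  fixes u :: "nat \<Rightarrow> 'x::euclidean_space \<Rightarrow> 'a::euclidean_space"
  assumes pu: "\<And>j. j < s \<Longrightarrow> polynomial_function (u j)"
    and ind0: "\<And>c. (\<Sum>j<s. c j *\<^sub>R u j x0) = 0 \<Longrightarrow> \<forall>j<s. c j = 0"
  shows "\<exists>p::'x \<Rightarrow> real. polynomial_function p \<and> p x0 \<noteq> 0 \<and>
     (\<forall>x. p x \<noteq> 0 \<longrightarrow> (\<forall>c. (\<Sum>j<s. c j *\<^sub>R u j x) = 0 \<longrightarrow> (\<forall>j<s. c j = 0)))"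
proof -
  define G where "G x = Matrix.mat s s (\<lambda>(i,j). u i x \<bullet> u j x)" for x
  define p where "p x = Determinant.det (G x)" for x
  have Gc: "G x \<in> carrier_mat s s" for x by (simp add: G_def)
  have pe: "p x = (\<Sum>\<pi>\<in>{\<pi>. \<pi> permutes {0..<s}}. signof \<pi> * (\<Prod>i=0..<s. u i x \<bullet> u (\<pi> i) x))" for x
    unfolding p_def det_def'[OF Gc]
  proof (intro sum.cong refl arg_cong2[where f="(*)"] prod.cong)
    fix \<pi> i assume "\<pi> \<in> {\<pi>. \<pi> permutes {0..<s}}" "i \<in> {0..<s}"
    then have "\<pi> i < s" using permutes_in_image by fastforce
    then show "G x $$ (i, \<pi> i) = u i x \<bullet> u (\<pi> i) x" using \<open>i \<in> {0..<s}\<close> by (simp add: G_def)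
  qed
  have pp: "polynomial_function p"
  proof -
    have "real_polynomial_function (\<lambda>x. \<Sum>\<pi>\<in>{\<pi>. \<pi> permutes {0..<s}}. signof \<pi> * (\<Prod>i=0..<s. u i x \<bullet> u (\<pi> i) x))"
    proof (intro real_polynomial_function_sum real_polynomial_function.intros(4) real_polynomial_function.intros(2) real_polynomial_function_prod)
      show "finite {\<pi>. \<pi> permutes {0..<s}}" by (simp add: finite_permutations)
    next
      fix \<pi> i assume "\<pi> \<in> {\<pi>. \<pi> permutes {0..<s}}" "i \<in> {0..<s}"
      then have "\<pi> i < s" using permutes_in_image by fastforce
      then show "real_polynomial_function (\<lambda>x. u i x \<bullet> u (\<pi> i) x)"
        using \<open>i \<in> {0..<s}\<close> pu by (simp add: real_polynomial_function_eq poly_inner)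
    qed auto
    moreover have "p = (\<lambda>x. \<Sum>\<pi>\<in>{\<pi>. \<pi> permutes {0..<s}}. signof \<pi> * (\<Prod>i=0..<s. u i x \<bullet> u (\<pi> i) x))"
      using pe by (rule ext)
    ultimately show ?thesis by (simp add: real_polynomial_function_eq)
  qed
  have key: "(G x *\<^sub>v Matrix.vec s c) $ i = u i x \<bullet> (\<Sum>j<s. c j *\<^sub>R u j x)" if "i < s" for x c i
  proof -
    have "(G x *\<^sub>v Matrix.vec s c) $ i = (\<Sum>j\<in>{0..<s}. (u i x \<bullet> u j x) * c j)"
      using that by (simp add: G_def scalar_prod_def)
    also have "\<dots> = u i x \<bullet> (\<Sum>j<s. c j *\<^sub>R u j x)"
      by (simp add: inner_sum_right lessThan_atLeast0 mult.commute)
    finally show ?thesis .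
  qed
  have A: "\<forall>c. (\<Sum>j<s. c j *\<^sub>R u j x) = 0 \<longrightarrow> (\<forall>j<s. c j = 0)" if px: "p x \<noteq> 0" for x
  proof (rule allI, rule impI)
    fix c assume c0: "(\<Sum>j<s. c j *\<^sub>R u j x) = 0"
    show "\<forall>j<s. c j = 0"
    proof (rule ccontr)
      assume "\<not> (\<forall>j<s. c j = 0)"
      then obtain j where j: "j < s" "c j \<noteq> 0" by auto
      have "Matrix.vec s c \<noteq> 0\<^sub>v s"
      proof
        assume "Matrix.vec s c = 0\<^sub>v s"
        then have "Matrix.vec s c $ j = 0\<^sub>v s $ j" by simp
        then show False using j by simp
      qed
      moreover have "G x *\<^sub>v Matrix.vec s c = 0\<^sub>v s"
        by (rule eq_vecI) (use key c0 in \<open>auto simp: G_def\<close>)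
      ultimately have "Determinant.det (G x) = 0"
        using det_0_iff_vec_prod_zero[OF Gc] vec_carrier by blast
      then show False using px p_def by simp
    qed
  qed
  have B: "p x0 \<noteq> 0"
  proof
    assume "p x0 = 0"
    then obtain v where v: "v \<in> carrier_vec s" "v \<noteq> 0\<^sub>v s" "G x0 *\<^sub>v v = 0\<^sub>v s"
      using det_0_iff_vec_prod_zero[OF Gc] p_def by metis
    define c where "c j = v $ j" for j
    have vv: "v = Matrix.vec s c"
      using v(1) by (intro eq_vecI) (auto simp: c_def)
    define w where "w = (\<Sum>j<s. c j *\<^sub>R u j x0)"
    have orth: "u i x0 \<bullet> w = 0" if "i < s" for i
      using key[of i x0 c] v(3) that vv w_def by simp
    have "w \<bullet> w = (\<Sum>j<s. c j * (u j x0 \<bullet> w))"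
      by (simp add: w_def[of] inner_sum_left)
    also have "\<dots> = 0" using orth by simp
    finally have "w = 0" by simp
    then have "\<forall>j<s. c j = 0" using ind0[of c] w_def by simp
    then have "v = 0\<^sub>v s" using v(1) by (intro eq_vecI) (auto simp: c_def)
    then show False using v(2) by simp
  qed
  show ?thesis
  proof (rule exI[of _ p], intro conjI allI impI)
    fix x c j assume "p x \<noteq> 0" "(\<Sum>j<s. c j *\<^sub>R u j x) = 0" "j < s"
    then show "c j = 0" using A[of x] by blast
  qed (use pp B in auto)
qed




lemma cindep:
  fixes v :: "nat \<Rightarrow> 'a::euclidean_space"
  assumes h: "\<And>c. (\<Sum>k<s. c k *\<^sub>R v k) = 0 \<Longrightarrow> \<forall>k<s. c k = 0"
  shows "inj_on v {..<s} \<and> independent (v ` {..<s})"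
proof
  show inj: "inj_on v {..<s}"
  proof (rule inj_onI, rule ccontr)
    fix i j assume ij: "i \<in> {..<s}" "j \<in> {..<s}" "v i = v j" "i \<noteq> j"
    define c where "c k = (if k = i then 1 else if k = j then -1 else (0::real))" for k
    have "(\<Sum>k<s. c k *\<^sub>R v k) = (\<Sum>k\<in>{i,j}. c k *\<^sub>R v k)"
      using ij by (intro sum.mono_neutral_right) (auto simp: c_def)
    also have "\<dots> = 0" using ij by (simp add: c_def)
    finally have "c i = 0" using h ij by blast
    then show False by (simp add: c_def)
  qed
  show "independent (v ` {..<s})"
  proof (rule independent_if_scalars_zero)
    fix f x assume f: "(\<Sum>x\<in>v ` {..<s}. f x *\<^sub>R x) = 0" and x: "x \<in> v ` {..<s}"
    have "(\<Sum>k<s. f (v k) *\<^sub>R v k) = 0" using f by (simp add: sum.reindex[OF inj])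
    then have "\<forall>k<s. f (v k) = 0" by (rule h)
    then show "f x = 0" using x by auto
  qed simp
qed

lemma rank_lsc:
  fixes g :: "'i \<Rightarrow> 'x::euclidean_space \<Rightarrow> 'a::euclidean_space"
  assumes fin: "finite I" and pg: "\<And>i. i \<in> I \<Longrightarrow> polynomial_function (g i)"
  shows "\<exists>p::'x \<Rightarrow> real. polynomial_function p \<and> p x0 \<noteq> 0 \<and>
     (\<forall>x. p x \<noteq> 0 \<longrightarrow> dim (span ((\<lambda>i. g i x0) ` I)) \<le> dim (span ((\<lambda>i. g i x) ` I)))"
proof -
  let ?S0 = "(\<lambda>i. g i x0) ` I"
  obtain Bs where Bs: "Bs \<subseteq> ?S0" "independent Bs" "?S0 \<subseteq> span Bs"
    using maximal_independent_subset by blast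
  have "span ?S0 = span Bs"
    using Bs by (metis span_mono span_span subset_antisym span_minimal subspace_span)
  then have dimS0: "dim (span ?S0) = card Bs" using Bs(2) by (metis dim_span_eq_card_independent)
  obtain J where J: "J \<subseteq> I" "inj_on (\<lambda>i. g i x0) J" "Bs = (\<lambda>i. g i x0) ` J"
    using Bs(1) subset_image_inj by metis
  have finJ: "finite J" using J(1) fin finite_subset by blast
  obtain js where js: "distinct js" "set js = J" using finite_distinct_list[OF finJ] by blast
  define s where "s = length js"
  have sJ: "s = card J" using js distinct_card s_def by metis
  have cB: "card Bs = card J" using J card_image by metis
  have nthJ: "js ! k \<in> J" if "k < s" for k using that js s_def nth_mem by blast
  define u where "u k = g (js ! k)" for k
  have pu: "polynomial_function (u k)" if "k < s" for k
    using nthJ[OF that] J(1) pg u_def by auto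
  have injk: "inj_on (\<lambda>k. js ! k) {..<s}"
    using js(1) s_def by (simp add: inj_on_def nth_eq_iff_index_eq)
  have imk: "(\<lambda>k. js ! k) ` {..<s} = J"
    using bij_betw_nth[OF js(1), of "{..<s}" J] s_def js(2) by (simp add: bij_betw_def)
  have inj0: "inj_on (\<lambda>k. u k x0) {..<s}"
    using comp_inj_on[OF injk, of "\<lambda>i. g i x0"] J(2) imk by (simp add: u_def o_def)
  have im0: "(\<lambda>k. u k x0) ` {..<s} = Bs"
  proof -
    have "(\<lambda>i. g i x0) ` J = (\<lambda>i. g i x0) ` ((\<lambda>k. js!k) ` {..<s})" using imk by simp
    then show ?thesis unfolding J(3) u_def by (simp add: image_image)
  qed
  have ind0: "\<forall>k<s. c k = 0" if c: "(\<Sum>k<s. c k *\<^sub>R u k x0) = 0" for c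
  proof -
    define d where "d b = c (inv_into {..<s} (\<lambda>k. u k x0) b)" for b
    have "(\<Sum>b\<in>Bs. d b *\<^sub>R b) = (\<Sum>k<s. d (u k x0) *\<^sub>R u k x0)"
      unfolding im0[symmetric] by (rule sum.reindex[OF inj0, unfolded o_def])
    also have "\<dots> = (\<Sum>k<s. c k *\<^sub>R u k x0)"
      by (intro sum.cong refl) (simp add: d_def inv_into_f_f[OF inj0])
    finally have "(\<Sum>b\<in>Bs. d b *\<^sub>R b) = 0" using c by simp
    moreover have "finite Bs" using J(3) finJ by simp
    ultimately have "\<forall>b\<in>Bs. d b = 0"
      using Bs(2) unfolding independent_explicit_finite_subsets by blast
    then show ?thesis using im0 by (auto simp: d_def inv_into_f_f[OF inj0])
  qed
  obtain p :: "'x \<Rightarrow> real" where p: "polynomial_function p" "p x0 \<noteq> 0"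
     "\<And>x. p x \<noteq> 0 \<Longrightarrow> (\<forall>c. (\<Sum>j<s. c j *\<^sub>R u j x) = 0 \<longrightarrow> (\<forall>j<s. c j = 0))"
    using gram_cert[of s u x0, OF pu ind0] by blast
  have "dim (span ((\<lambda>i. g i x) ` I)) \<ge> dim (span ?S0)" if px: "p x \<noteq> 0" for x
  proof -
    have ci: "inj_on (\<lambda>k. u k x) {..<s} \<and> independent ((\<lambda>k. u k x) ` {..<s})"
      using p(3)[OF px] by (intro cindep) blast
    have sub: "(\<lambda>k. u k x) ` {..<s} \<subseteq> span ((\<lambda>i. g i x) ` I)"
      using nthJ J(1) by (auto simp: u_def intro!: span_base)
    have "card ((\<lambda>k. u k x) ` {..<s}) = s" using ci card_image by fastforce
    then have "s \<le> dim (span ((\<lambda>i. g i x) ` I))"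
      using independent_card_le_dim[OF sub] ci by simp
    then show ?thesis using dimS0 cB sJ by simp
  qed
  then show ?thesis using p(1,2) by blast
qed




lemma stab_iff:
  assumes "linear (\<rho> X)"
  shows "X \<in> stab \<rho> v \<longleftrightarrow> (\<forall>b. v \<bullet> \<rho> X b = 0)"
proof -
  have "X \<in> stab \<rho> v \<longleftrightarrow> adjoint (\<rho> X) v = 0" by (simp add: stab_def dual_rep_def)
  also have "\<dots> \<longleftrightarrow> (\<forall>b. b \<bullet> adjoint (\<rho> X) v = 0)"
    by (metis inner_eq_zero_iff inner_zero_right)
  also have "\<dots> \<longleftrightarrow> (\<forall>b. v \<bullet> \<rho> X b = 0)"
    by (simp add: adjoint_works[OF assms] inner_commute)
  finally show ?thesis .
qed

lemma rep_facts:
  assumes "lie_rep br \<rho>"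
  shows "linear (\<rho> X)" "linear (\<lambda>X. \<rho> X a)" "\<rho> 0 a = 0" "\<rho> X 0 = 0"
proof -
  show l1: "linear (\<rho> X)" and l2: "linear (\<lambda>X. \<rho> X a)" using assms by (auto simp: lie_rep_def)
  show "\<rho> 0 a = 0" using linear_0[OF l2] .
  show "\<rho> X 0 = 0" using linear_0[OF l1] .
qed

lemma stab_iff':
  assumes "lie_rep br \<rho>"
  shows "X \<in> stab \<rho> v \<longleftrightarrow> (\<forall>b. v \<bullet> \<rho> X b = 0)"
  using stab_iff rep_facts[OF assms] by blast

lemma subspace_stab:
  assumes "lie_rep br \<rho>"
  shows "subspace (stab \<rho> v)"
proof -
  have l: "\<And>b. linear (\<lambda>X. \<rho> X b)" using rep_facts[OF assms] by blast
  show ?thesis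
    unfolding subspace_def
    by (auto simp: stab_iff'[OF assms] linear_add[OF l] linear_scale[OF l] linear_0[OF l] inner_add_right)
qed

lemma lie_facts:
  assumes "lie_algebra br"
  shows "bilinear br" "br 0 y = 0" "br x 0 = 0" "br x y = - br y x"
proof -
  show b: "bilinear br" using assms by (simp add: lie_algebra_def)
  show "br 0 y = 0" using bilinear_lzero[OF b] by simp
  show "br x 0 = 0" using bilinear_rzero[OF b] by simp
  have "br (x+y) (x+y) = 0" "br x x = 0" "br y y = 0" using assms by (auto simp: lie_algebra_def)
  then show "br x y = - br y x"
    by (simp add: bilinear_ladd[OF b] bilinear_radd[OF b] add_eq_0_iff)
qed

lemma stab_subalg:
  assumes "lie_rep br \<rho>" "X \<in> stab \<rho> v" "Y \<in> stab \<rho> v"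
  shows "br X Y \<in> stab \<rho> v"
  using assms unfolding stab_iff'[OF assms(1)] lie_rep_def by (simp add: inner_diff_right)

lemma sd_bilinear:
  assumes "lie_algebra br" "lie_rep br \<rho>"
  shows "bilinear (sd_br br \<rho>)"
proof -
  have b: "bilinear br" using lie_facts[OF assms(1)] by blast
  have l1: "\<And>X. linear (\<rho> X)" and l2: "\<And>a. linear (\<lambda>X. \<rho> X a)" using rep_facts[OF assms(2)] by blast+
  show ?thesis
    unfolding bilinear_def
  proof (intro conjI allI linearI)
    fix x y z :: "'a \<times> 'b" and c :: real
    show "sd_br br \<rho> x (y + z) = sd_br br \<rho> x y + sd_br br \<rho> x z"
      by (simp add: sd_br_def bilinear_radd[OF b] linear_add[OF l1] linear_add[OF l2])
    show "sd_br br \<rho> x (c *\<^sub>R y) = c *\<^sub>R sd_br br \<rho> x y"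
      by (simp add: sd_br_def bilinear_rmul[OF b] linear_scale[OF l1] linear_scale[OF l2] scaleR_diff_right)
    show "sd_br br \<rho> (y + z) x = sd_br br \<rho> y x + sd_br br \<rho> z x"
      by (simp add: sd_br_def bilinear_ladd[OF b] linear_add[OF l1] linear_add[OF l2])
    show "sd_br br \<rho> (c *\<^sub>R y) x = c *\<^sub>R sd_br br \<rho> y x"
      by (simp add: sd_br_def bilinear_lmul[OF b] linear_scale[OF l1] linear_scale[OF l2] scaleR_diff_right)
  qed
qed

lemma grad_partial:
  fixes f :: "'k::euclidean_space \<times> 'v::euclidean_space \<Rightarrow> real"
  assumes "polynomial_function f"
  shows "grad (\<lambda>M. f (M, v)) M = fst (grad f (M, v))"
proof -
  have d: "(f has_derivative (\<lambda>h. grad f (M,v) \<bullet> h)) (at (M,v))" using grad_poly[OF assms] by blast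
  have e: "((\<lambda>M. (M, v)) has_derivative (\<lambda>h. (h, 0))) (at M)"
    by (auto intro!: derivative_eq_intros)
  have "((\<lambda>M. f (M, v)) has_derivative (\<lambda>h. grad f (M,v) \<bullet> (h, 0))) (at M)"
    using diff_chain_at[OF e d] by (simp add: o_def)
  then have "((\<lambda>M. f (M, v)) has_derivative (\<lambda>h. fst (grad f (M,v)) \<bullet> h)) (at M)"
    by (simp add: inner_Pair_0)
  then show ?thesis by (rule grad_unique)
qed

lemma grad_lin:
  "grad (\<lambda>x::'k::euclidean_space \<times> 'v::euclidean_space. snd x \<bullet> a) x = (0, a)"
proof (rule grad_unique)
  show "((\<lambda>x. snd x \<bullet> a) has_derivative (\<lambda>h. (0, a) \<bullet> h)) (at x)"
  proof -
    have "bounded_linear (\<lambda>x::'k \<times> 'v. snd x \<bullet> a)"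
      by (intro bounded_linear_compose[OF bounded_linear_inner_left bounded_linear_snd])
    then have "((\<lambda>x. snd x \<bullet> a) has_derivative (\<lambda>x. snd x \<bullet> a)) (at x)"
      by (rule bounded_linear_imp_has_derivative)
    moreover have "(\<lambda>h::'k \<times> 'v. snd h \<bullet> a) = (\<lambda>h. (0, a) \<bullet> h)"
      by (auto simp: inner_Pair_0 inner_commute fun_eq_iff)
    ultimately show ?thesis by simp
  qed
qed

lemma annih_scale: "L \<in> annihilator S \<Longrightarrow> t *\<^sub>R L \<in> annihilator S"
  by (simp add: annihilator_def)

lemma Xstab:
  fixes f :: "'k::euclidean_space \<times> 'v::euclidean_space \<Rightarrow> real"
  assumes rep: "lie_rep br \<rho>" and pf: "polynomial_function f"
    and inv: "\<forall>M v L. L \<in> annihilator (stab \<rho> v) \<longrightarrow> f (M, v) = f (M + L, v)"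
  shows "fst (grad f (M, v)) \<in> stab \<rho> v"
proof -
  let ?X = "fst (grad f (M, v))"
  have orth: "?X \<bullet> L = 0" if L: "L \<in> annihilator (stab \<rho> v)" for L
  proof -
    have d: "(f has_derivative (\<lambda>h. grad f (M,v) \<bullet> h)) (at ((\<lambda>t::real. (M + t *\<^sub>R L, v)) 0))"
      using grad_poly[OF pf] by simp
    have e: "((\<lambda>t::real. (M + t *\<^sub>R L, v)) has_derivative (\<lambda>t. (t *\<^sub>R L, 0))) (at 0)"
      by (auto intro!: derivative_eq_intros)
    have "((\<lambda>t. f (M + t *\<^sub>R L, v)) has_derivative (\<lambda>t. grad f (M,v) \<bullet> (t *\<^sub>R L, 0))) (at 0)"
      using diff_chain_at[OF e d] by (simp add: o_def)
    moreover have "(\<lambda>t. f (M + t *\<^sub>R L, v)) = (\<lambda>t. f (M, v))"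
    proof (rule ext)
      fix t show "f (M + t *\<^sub>R L, v) = f (M, v)"
        by (rule sym[OF inv[rule_format, OF annih_scale[OF L, of t]]])
    qed
    moreover have "(\<lambda>t. grad f (M,v) \<bullet> (t *\<^sub>R L, 0)) = (*) (?X \<bullet> L)"
      by (auto simp: inner_Pair_0 fun_eq_iff)
    ultimately have "((\<lambda>t. f (M, v)) has_real_derivative (?X \<bullet> L)) (at 0)"
      unfolding has_field_derivative_def by metis
    moreover have "((\<lambda>t. f (M, v)) has_real_derivative 0) (at 0)" by simp
    ultimately show ?thesis using DERIV_unique by blast
  qed
  obtain y z where yz: "y \<in> span (stab \<rho> v)" "\<And>w. w \<in> span (stab \<rho> v) \<Longrightarrow> real_inner_class.orthogonal z w" "?X = y + z"
    using orthogonal_subspace_decomp_exists by blast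
  have sp: "span (stab \<rho> v) = stab \<rho> v" using subspace_stab[OF rep] by (simp add: span_eq_iff)
  have "z \<in> annihilator (stab \<rho> v)"
    using yz(2) by (auto simp: annihilator_def sp real_inner_class.orthogonal_def)
  then have "?X \<bullet> z = 0" by (rule orth)
  moreover have "y \<bullet> z = 0" using yz(1,2) by (simp add: real_inner_class.orthogonal_def inner_commute)
  ultimately have "z \<bullet> z = 0" using yz(3) by (simp add: inner_add_left)
  then have "z = 0" by simp
  then show ?thesis using yz(1,3) sp by simp
qed

lemma partial_deriv:
  fixes f :: "'k::euclidean_space \<times> 'v::euclidean_space \<Rightarrow> real"
  assumes "polynomial_function f"
  shows "((\<lambda>M. f (M, v)) has_derivative (\<lambda>h. fst (grad f (M, v)) \<bullet> h)) (at M)"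
proof -
  have d: "(f has_derivative (\<lambda>h. grad f (M,v) \<bullet> h)) (at (M,v))" using grad_poly[OF assms] by blast
  have e: "((\<lambda>M. (M, v)) has_derivative (\<lambda>h. (h, 0))) (at M)"
    by (auto intro!: derivative_eq_intros)
  have "((\<lambda>M. f (M, v)) has_derivative (\<lambda>h. grad f (M,v) \<bullet> (h, 0))) (at M)"
    using diff_chain_at[OF e d] by (simp add: o_def)
  then show ?thesis by (simp add: inner_Pair_0)
qed

lemma transl:
  fixes f :: "'k::euclidean_space \<times> 'v::euclidean_space \<Rightarrow> real"
  assumes pf: "polynomial_function f"
    and inv: "\<forall>M v L. L \<in> annihilator (stab \<rho> v) \<longrightarrow> f (M, v) = f (M + L, v)"
    and L: "L \<in> annihilator (stab \<rho> v)"
  shows "fst (grad f (y + L, v)) = fst (grad f (y, v))"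
proof -
  let ?G = "\<lambda>M. f (M, v)"
  have d: "(?G has_derivative (\<lambda>h. fst (grad f (y + L, v)) \<bullet> h)) (at ((\<lambda>z. z + L) y))"
    using partial_deriv[OF pf] by simp
  have e: "((\<lambda>z. z + L) has_derivative (\<lambda>h. h)) (at y)"
    by (auto intro!: derivative_eq_intros)
  have "((?G \<circ> (\<lambda>z. z + L)) has_derivative (\<lambda>h. fst (grad f (y + L, v)) \<bullet> h)) (at y)"
    using diff_chain_at[OF e d] by (simp add: o_def)
  moreover have "?G \<circ> (\<lambda>z. z + L) = ?G"
  proof (rule ext)
    fix z show "(?G \<circ> (\<lambda>z. z + L)) z = ?G z"
      by (simp only: o_def) (rule sym[OF inv[rule_format, OF L]])
  qed
  ultimately have "(?G has_derivative (\<lambda>h. fst (grad f (y + L, v)) \<bullet> h)) (at y)" by simp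
  then have "grad ?G y = fst (grad f (y + L, v))" by (rule grad_unique)
  then show ?thesis using grad_partial[OF pf] by simp
qed


no_notation Matrix.scalar_prod (infix \<open>\<bullet>\<close> 70)




lemma bil_inner_comp:
  assumes "bilinear B"
  shows "bilinear (\<lambda>a b. x \<bullet> B a b)"
  unfolding bilinear_def
  by (auto intro!: linearI simp: bilinear_ladd[OF assms] bilinear_radd[OF assms]
      bilinear_lmul[OF assms] bilinear_rmul[OF assms] inner_add_right)

lemma iso_span:
  assumes b: "bilinear B" and h: "\<And>a c. a \<in> S \<Longrightarrow> c \<in> S \<Longrightarrow> x \<bullet> B a c = 0"
  shows "isotropic B x (span S)"
  unfolding isotropic_def
proof (intro ballI)
  fix a c assume "a \<in> span S" "c \<in> span S"
  have z: "bilinear (\<lambda>a c. 0::real)" unfolding bilinear_def by (auto intro: linearI)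
  show "x \<bullet> B a c = 0"
    using bilinear_eq[OF bil_inner_comp[OF b] z, of "span S" S "span S" S a c] \<open>a \<in> span S\<close> \<open>c \<in> span S\<close> h
    by simp
qed

lemma perp_subspace:
  assumes b: "bilinear B"
  shows "subspace {\<xi>. \<forall>w\<in>W. x \<bullet> B \<xi> w = 0}"
  unfolding subspace_def
  by (auto simp: bilinear_ladd[OF b] bilinear_lmul[OF b] bilinear_lzero[OF b] inner_add_right)

lemma aa_prop:
  fixes B :: "'a::euclidean_space \<Rightarrow> 'a \<Rightarrow> 'a"
  assumes b: "bilinear B"
  shows "(\<Sum>b\<in>Basis. (x \<bullet> B b g) *\<^sub>R b) \<bullet> \<xi> = x \<bullet> B \<xi> g"
proof -
  have l: "linear (\<lambda>a. x \<bullet> B a g)" using bil_inner_comp[OF b, of x] by (simp add: bilinear_def)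
  have "x \<bullet> B \<xi> g = (\<lambda>a. x \<bullet> B a g) (\<Sum>b\<in>Basis. (\<xi> \<bullet> b) *\<^sub>R b)" by (simp add: euclidean_representation)
  also have "\<dots> = (\<Sum>b\<in>Basis. (\<xi> \<bullet> b) * (x \<bullet> B b g))" by (simp add: linear_sum[OF l] linear_scale[OF l])
  finally show ?thesis by (simp add: inner_sum_left inner_sum_right mult.commute inner_commute)
qed





lemma comm_fij:
  fixes br :: "'k::euclidean_space \<Rightarrow> 'k \<Rightarrow> 'k"
    and \<rho> :: "'k \<Rightarrow> 'v::euclidean_space \<Rightarrow> 'v"
    and f :: "nat \<Rightarrow> 'k \<times> 'v \<Rightarrow> real"
  assumes la: "lie_algebra br" and rep: "lie_rep br \<rho>"
    and pf: "\<forall>i<l. polynomial_function (f i)"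
    and inv: "\<forall>i<l. \<forall>M v L. L \<in> annihilator (stab \<rho> v) \<longrightarrow> f i (M, v) = f i (M + L, v)"
    and gen: "generic_on UNIV (\<lambda>v. complete_comm_set br (stab \<rho> v) ((\<lambda>i M. f i (M, v)) ` {..<l}))"
    and ij: "i < l" "j < l"
  shows "x \<bullet> sd_br br \<rho> (grad (f i) x) (grad (f j) x) = 0"
proof -
  have b: "bilinear br" using lie_facts[OF la] by blast
  have pfi: "polynomial_function (f i)" "polynomial_function (f j)" using pf ij by auto
  have invi: "\<forall>M v L. L \<in> annihilator (stab \<rho> v) \<longrightarrow> f i (M, v) = f i (M + L, v)"
   and invj: "\<forall>M v L. L \<in> annihilator (stab \<rho> v) \<longrightarrow> f j (M, v) = f j (M + L, v)"
    by (rule mp[OF spec[OF inv, of i] ij(1)], rule mp[OF spec[OF inv, of j] ij(2)])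
  obtain q :: "'v \<Rightarrow> real" where q: "polynomial_function q" "\<exists>y. q y \<noteq> 0"
    "\<And>v. q v \<noteq> 0 \<Longrightarrow> complete_comm_set br (stab \<rho> v) ((\<lambda>i M. f i (M, v)) ` {..<l})"
    using gen unfolding generic_on_def by blast
  define Q where "Q x = fst x \<bullet> br (fst (grad (f i) x)) (fst (grad (f j) x))" for x
  have pQ: "polynomial_function Q"
    unfolding Q_def
  proof (intro poly_inner poly_bilin[OF b])
    show "polynomial_function (fst :: 'k \<times> 'v \<Rightarrow> 'k)"
      by (rule polynomial_function_bounded_linear[OF bounded_linear_fst])
    show "polynomial_function (\<lambda>x. fst (grad (f i) x))"
      using polynomial_function_compose[OF conjunct1[OF grad_poly[OF pfi(1)]]
            polynomial_function_bounded_linear[OF bounded_linear_fst]] by (simp add: o_def)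
    show "polynomial_function (\<lambda>x. fst (grad (f j) x))"
      using polynomial_function_compose[OF conjunct1[OF grad_poly[OF pfi(2)]]
            polynomial_function_bounded_linear[OF bounded_linear_fst]] by (simp add: o_def)
  qed
  have Qz: "Q (M, v) = 0" if qv: "q v \<noteq> 0" for M v
  proof -
    have ccs: "complete_comm_set br (stab \<rho> v) ((\<lambda>i M. f i (M, v)) ` {..<l})" using q(3)[OF qv] .
    have sp: "span (stab \<rho> v) = stab \<rho> v" using subspace_stab[OF rep] by (simp add: span_eq_iff)
    obtain y L where yL: "y \<in> span (stab \<rho> v)" "\<And>w. w \<in> span (stab \<rho> v) \<Longrightarrow> real_inner_class.orthogonal L w" "M = y + L"
      using orthogonal_subspace_decomp_exists by blast
    have y: "y \<in> stab \<rho> v" using yL(1) sp by simp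
    have L: "L \<in> annihilator (stab \<rho> v)"
      using yL(2) by (auto simp: annihilator_def sp real_inner_class.orthogonal_def)
    have ti: "fst (grad (f i) (y + L, v)) = fst (grad (f i) (y, v))" using transl[OF pfi(1) invi L] by simp
    have tj: "fst (grad (f j) (y + L, v)) = fst (grad (f j) (y, v))" using transl[OF pfi(2) invj L] by simp
    have Xi: "fst (grad (f i) (y, v)) \<in> stab \<rho> v" by (rule Xstab[OF rep pfi(1) invi])
    have Xj: "fst (grad (f j) (y, v)) \<in> stab \<rho> v" by (rule Xstab[OF rep pfi(2) invj])
    have brs: "br (fst (grad (f i) (y, v))) (fst (grad (f j) (y, v))) \<in> stab \<rho> v"
      by (rule stab_subalg[OF rep Xi Xj])
    have "L \<bullet> br (fst (grad (f i) (y, v))) (fst (grad (f j) (y, v))) = 0"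
      using L brs by (simp add: annihilator_def)
    moreover have "y \<bullet> br (fst (grad (f i) (y, v))) (fst (grad (f j) (y, v))) = 0"
    proof -
      have "(\<lambda>M. f i (M, v)) \<in> (\<lambda>i M. f i (M, v)) ` {..<l}" "(\<lambda>M. f j (M, v)) \<in> (\<lambda>i M. f i (M, v)) ` {..<l}"
        using ij by auto
      then have "lp_bracket br (\<lambda>M. f i (M, v)) (\<lambda>M. f j (M, v)) y = 0"
        using ccs y unfolding complete_comm_set_def by blast
      then show ?thesis by (simp add: lp_bracket_def grad_partial[OF pfi(1)] grad_partial[OF pfi(2)])
    qed
    ultimately show ?thesis by (simp add: Q_def ti tj yL(3) inner_add_left)
  qed
  obtain vq where vq: "q vq \<noteq> 0" using q(2) by blast
  have Q0: "Q x = 0"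
  proof (rule poly_zero_dense[OF pQ _ _ ])
    show "polynomial_function (\<lambda>x::'k \<times> 'v. q (snd x))"
      using polynomial_function_compose[OF polynomial_function_bounded_linear[OF bounded_linear_snd] q(1)]
      by (simp add: o_def)
    show "q (snd (0::'k, vq)) \<noteq> 0" using vq by simp
    fix z :: "'k \<times> 'v" assume "q (snd z) \<noteq> 0" then show "Q z = 0" using Qz by (cases z) auto
  qed
  obtain M v where x: "x = (M, v)" by (cases x)
  let ?Xi = "fst (grad (f i) (M,v))" and ?Yi = "snd (grad (f i) (M,v))"
  let ?Xj = "fst (grad (f j) (M,v))" and ?Yj = "snd (grad (f j) (M,v))"
  have Xi: "?Xi \<in> stab \<rho> v" by (rule Xstab[OF rep pfi(1) invi])
  have Xj: "?Xj \<in> stab \<rho> v" by (rule Xstab[OF rep pfi(2) invj])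
  have "x \<bullet> sd_br br \<rho> (grad (f i) x) (grad (f j) x) = M \<bullet> br ?Xi ?Xj + v \<bullet> \<rho> ?Xi ?Yj - v \<bullet> \<rho> ?Xj ?Yi"
    by (simp add: x sd_br_def inner_Pair inner_diff_right)
  also have "\<dots> = M \<bullet> br ?Xi ?Xj"
    using Xi Xj by (simp add: stab_iff'[OF rep])
  also have "\<dots> = Q x" by (simp add: Q_def x)
  finally show ?thesis using Q0 by simp
qed





lemma sum_pair0:
  fixes c :: "'v::euclidean_space \<Rightarrow> real"
  shows "(\<Sum>b\<in>B. c b *\<^sub>R ((0::'k::real_vector), b)) = (0, \<Sum>b\<in>B. c b *\<^sub>R b)"
  by (rule prod_eqI) (simp_all add: fst_sum snd_sum)

theorem lemma13:
  fixes br :: "'k::euclidean_space \<Rightarrow> 'k \<Rightarrow> 'k"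
    and \<rho> :: "'k \<Rightarrow> 'v::euclidean_space \<Rightarrow> 'v"
    and f :: "nat \<Rightarrow> 'k \<times> 'v \<Rightarrow> real"
    and l :: nat
  assumes "lie_algebra br"
    and "lie_rep br \<rho>"
    and "\<forall>i<l. polynomial_function (f i)"
    and "\<forall>i<l. \<forall>M v L. L \<in> annihilator (stab \<rho> v) \<longrightarrow> f i (M, v) = f i (M + L, v)"
    and "generic_on UNIV (\<lambda>v. complete_comm_set br (stab \<rho> v) ((\<lambda>i M. f i (M, v)) ` {..<l}))"
  shows "complete_comm_set (sd_br br \<rho>) UNIV
           (f ` {..<l} \<union> (\<lambda>a x. snd x \<bullet> a) ` UNIV)"
proof -
  note la = assms(1) and rep = assms(2) and pf = assms(3) and inv = assms(4) and gen = assms(5)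
  define B2 where "B2 = sd_br br \<rho>"
  define F where "F = f ` {..<l} \<union> (\<lambda>a x. snd x \<bullet> a) ` (UNIV :: 'v set)"
  define W where "W x = span ((\<lambda>g. grad g x) ` F)" for x
  have b: "bilinear br" and br0: "\<And>y. br 0 y = 0" "\<And>y. br y 0 = 0" and skew: "\<And>x y. br x y = - br y x"
    using lie_facts[OF la] by blast+
  have brxx: "\<And>x. br x x = 0" using la by (simp add: lie_algebra_def)
  have r0: "\<And>a. \<rho> 0 a = 0" "\<And>X. \<rho> X 0 = 0" using rep_facts[OF rep] by blast+
  have B2b: "bilinear B2" using sd_bilinear[OF la rep] by (simp add: B2_def)
  have pfi: "\<And>i. i < l \<Longrightarrow> polynomial_function (f i)" using pf by blast
  have invi: "\<And>i. i < l \<Longrightarrow> \<forall>M v L. L \<in> annihilator (stab \<rho> v) \<longrightarrow> f i (M, v) = f i (M + L, v)"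
    by (rule mp[OF spec[OF inv]])
  have Xs: "\<And>i M v. i < l \<Longrightarrow> fst (grad (f i) (M, v)) \<in> stab \<rho> v"
    using Xstab[OF rep pfi invi] by blast
  have Fcases: "\<And>g. g \<in> F \<Longrightarrow> (\<exists>i<l. g = f i) \<or> (\<exists>a. g = (\<lambda>x. snd x \<bullet> a))"
    unfolding F_def by blast
  have linF: "(\<lambda>x::'k \<times> 'v. snd x \<bullet> a) \<in> F" for a unfolding F_def by blast
  have fF: "i < l \<Longrightarrow> f i \<in> F" for i unfolding F_def by blast
  have comm: "x \<bullet> B2 (grad g x) (grad h x) = 0" if g: "g \<in> F" and h: "h \<in> F" for g h x
  proof -
    obtain M v where x: "x = (M, v)" by (cases x)
    from Fcases[OF g] Fcases[OF h] show ?thesis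
    proof (elim disjE exE conjE)
      fix i j assume "i < l" "g = f i" "j < l" "h = f j"
      then show ?thesis using comm_fij[OF la rep pf inv gen, of i j x] by (simp add: B2_def)
    next
      fix i a assume "i < l" "g = f i" "h = (\<lambda>x. snd x \<bullet> a)"
      then show ?thesis using Xs[of i M v]
        by (simp add: B2_def x grad_lin sd_br_def br0 r0 inner_Pair stab_iff'[OF rep])
    next
      fix i a assume "i < l" "h = f i" "g = (\<lambda>x. snd x \<bullet> a)"
      then show ?thesis using Xs[of i M v]
        by (simp add: B2_def x grad_lin sd_br_def br0 r0 inner_Pair stab_iff'[OF rep])
    next
      fix a c assume "g = (\<lambda>x. snd x \<bullet> a)" "h = (\<lambda>x. snd x \<bullet> c)"
      then show ?thesis by (simp add: B2_def x grad_lin sd_br_def br0 r0)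
    qed
  qed
  have iso: "isotropic B2 x (W x)" for x
    unfolding W_def by (rule iso_span[OF B2b]) (auto intro: comm)
  have polyF: "polynomial_function g" if "g \<in> F" for g
    using Fcases[OF that]
  proof (elim disjE exE conjE)
    fix i assume "i < l" "g = f i" then show ?thesis using pfi by simp
  next
    fix a assume "g = (\<lambda>x. snd x \<bullet> a)" then show ?thesis
      by (auto intro!: polynomial_function_bounded_linear
        bounded_linear_compose[OF bounded_linear_inner_left bounded_linear_snd])
  qed
  have generic: "generic_on UNIV (\<lambda>x. maximal_isotropic B2 UNIV x (W x))"
  proof -
    define I where "I = Inl ` {..<l} \<union> Inr ` (Basis :: 'v set)"
    define gn where "gn i x = (case i of Inl n \<Rightarrow> grad (f n) x | Inr c \<Rightarrow> ((0::'k), c))" for i x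
    define Wp where "Wp x = {\<xi>. \<forall>w\<in>W x. x \<bullet> B2 \<xi> w = 0}" for x
    have finI: "finite I" by (simp add: I_def)
    have gnI: "gn (Inl n) = grad (f n)" "gn (Inr c) = (\<lambda>x. (0, c))" for n c
      by (auto simp: gn_def fun_eq_iff)
    have pgn: "polynomial_function (gn i)" if "i \<in> I" for i
      using that grad_poly[OF pfi] by (auto simp: I_def gnI)
    have Wgn: "W x = span ((\<lambda>i. gn i x) ` I)" for x
      unfolding W_def span_eq
    proof (intro conjI subsetI)
      fix w assume "w \<in> (\<lambda>g. grad g x) ` F"
      then obtain g where g: "g \<in> F" "w = grad g x" by blast
      from Fcases[OF g(1)] show "w \<in> span ((\<lambda>i. gn i x) ` I)"
      proof (elim disjE exE conjE)
        fix i assume "i < l" "g = f i"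
        then have "w = gn (Inl i) x" "Inl i \<in> I" using g by (auto simp: gn_def I_def)
        then show ?thesis by (auto intro: span_base)
      next
        fix a assume "g = (\<lambda>x. snd x \<bullet> a)"
        then have "w = (0, a)" using g grad_lin by simp
        also have "\<dots> = (\<Sum>c\<in>Basis. (a \<bullet> c) *\<^sub>R gn (Inr c) x)"
          by (rule prod_eqI) (simp_all add: gn_def fst_sum snd_sum euclidean_representation)
        finally have wE: "w = (\<Sum>c\<in>Basis. (a \<bullet> c) *\<^sub>R gn (Inr c) x)" .
        have "(\<Sum>c\<in>Basis. (a \<bullet> c) *\<^sub>R gn (Inr c) x) \<in> span ((\<lambda>i. gn i x) ` I)"
        proof (rule span_sum, rule span_scale, rule span_base)
          fix c :: 'v assume "c \<in> Basis" then show "gn (Inr c) x \<in> (\<lambda>i. gn i x) ` I" by (auto simp: I_def)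
        qed
        then show ?thesis using wE by simp
      qed
    next
      fix w assume "w \<in> (\<lambda>i. gn i x) ` I"
      then obtain i where i: "i \<in> I" "w = gn i x" by blast
      show "w \<in> span ((\<lambda>g. grad g x) ` F)"
      proof (cases i)
        case (Inl n)
        then have "n < l" "w = grad (f n) x" using i by (auto simp: I_def gn_def)
        then show ?thesis using fF by (auto intro: span_base)
      next
        case (Inr c)
        then have "w = grad (\<lambda>x::'k \<times> 'v. snd x \<bullet> c) x" using i by (simp add: gn_def grad_lin)
        then show ?thesis using linF by (auto intro: span_base)
      qed
    qed
    have Wsub: "W x \<subseteq> Wp x" for x
      using iso[of x] by (auto simp: isotropic_def Wp_def)
    have sWp: "subspace (Wp x)" for x
      unfolding Wp_def by (rule perp_subspace[OF B2b])
    have gradW: "grad g x \<in> W x" if "g \<in> F" for g x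
      using that by (auto simp: W_def intro: span_base)
    have linW: "(0, a) \<in> W x" for a x
      using gradW[OF linF, of a x] by (simp add: grad_lin)
    obtain q :: "'v \<Rightarrow> real" where q: "\<exists>y. q y \<noteq> 0"
      "\<And>v. q v \<noteq> 0 \<Longrightarrow> complete_comm_set br (stab \<rho> v) ((\<lambda>i M. f i (M, v)) ` {..<l})"
      using gen unfolding generic_on_def by blast
    obtain v0 where v0: "q v0 \<noteq> 0" using q(1) by blast
    let ?Fv = "(\<lambda>i M. f i (M, v0)) ` {..<l}"
    have "generic_on (stab \<rho> v0) (\<lambda>y. maximal_isotropic br (stab \<rho> v0) y (span ((\<lambda>g. grad g y) ` ?Fv)))"
      using q(2)[OF v0] by (simp add: complete_comm_set_def)
    then obtain y0 where y0: "y0 \<in> stab \<rho> v0"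
      "maximal_isotropic br (stab \<rho> v0) y0 (span ((\<lambda>g. grad g y0) ` ?Fv))"
      unfolding generic_on_def by blast
    define S0 where "S0 = (\<lambda>g. grad g y0) ` ?Fv"
    define x0 where "x0 = (y0, v0)"
    have S0e: "S0 = (\<lambda>i. fst (grad (f i) x0)) ` {..<l}"
      by (auto simp: S0_def x0_def grad_partial[OF pfi] image_image)
    have max0: "maximal_isotropic br (stab \<rho> v0) y0 (span S0)" using y0(2) S0_def by simp
    have S0stab: "S0 \<subseteq> stab \<rho> v0" using Xs by (auto simp: S0e x0_def)
    have Wp0: "Wp x0 \<subseteq> W x0"
    proof
      fix \<xi> assume \<xi>: "\<xi> \<in> Wp x0"
      obtain X a where Xa: "\<xi> = (X, a)" by (cases \<xi>)
      have stabX: "X \<in> stab \<rho> v0"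
        unfolding stab_iff'[OF rep]
      proof
        fix c
        have "x0 \<bullet> B2 \<xi> (0, c) = 0" using \<xi> linW by (auto simp: Wp_def)
        then show "v0 \<bullet> \<rho> X c = 0" by (simp add: x0_def Xa B2_def sd_br_def br0 r0 inner_Pair)
      qed
      have orthX: "y0 \<bullet> br X s = 0" if s: "s \<in> S0" for s
      proof -
        obtain i where i: "i < l" "s = fst (grad (f i) x0)" using s S0e by auto
        have Xi: "s \<in> stab \<rho> v0" using S0stab s by blast
        have "x0 \<bullet> B2 \<xi> (grad (f i) x0) = 0" using \<xi> gradW[OF fF[OF i(1)]] by (auto simp: Wp_def)
        then show ?thesis using stabX Xi i(2)
          by (simp add: x0_def Xa B2_def sd_br_def inner_Pair inner_diff_right stab_iff'[OF rep])
      qed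
      have isoS0: "isotropic br y0 (span S0)" using max0 by (simp add: maximal_isotropic_def)
      define U where "U = span (insert X S0)"
      have "isotropic br y0 U"
        unfolding U_def
      proof (rule iso_span[OF b])
        fix s t assume s: "s \<in> insert X S0" and t: "t \<in> insert X S0"
        show "y0 \<bullet> br s t = 0"
        proof (cases "s = X")
          case True
          show ?thesis
          proof (cases "t = X")
            case True then show ?thesis using \<open>s = X\<close> brxx by simp
          next
            case False then show ?thesis using \<open>s = X\<close> t orthX by simp
          qed
        next
          case False
          then have sS: "s \<in> S0" using s by simp
          show ?thesis
          proof (cases "t = X")
            case True then show ?thesis using sS orthX skew[of s X] by simp
          next
            case False then have "t \<in> S0" using t by simp
            then show ?thesis using sS isoS0 by (auto simp: isotropic_def intro: span_base)
          qed
        qed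
      qed
      moreover have "subspace U" by (simp add: U_def)
      moreover have "span S0 \<subseteq> U" by (simp add: U_def span_mono subset_insertI)
      moreover have "U \<subseteq> stab \<rho> v0"
        unfolding U_def using stabX S0stab subspace_stab[OF rep] by (intro span_minimal) auto
      ultimately have "U = span S0" using max0 by (simp add: maximal_isotropic_def)
      then have XS: "X \<in> span S0" by (auto simp: U_def intro: span_base)
      have lfst: "linear (fst :: 'k \<times> 'v \<Rightarrow> 'k)" by (rule bounded_linear.linear[OF bounded_linear_fst])
      have "span S0 \<subseteq> fst ` W x0"
      proof (rule span_minimal)
        show "S0 \<subseteq> fst ` W x0"
        proof
          fix s assume "s \<in> S0"
          then obtain i where "i < l" "s = fst (grad (f i) x0)" using S0e by auto
          then show "s \<in> fst ` W x0" using gradW[OF fF[of i], of x0] by auto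
        qed
        show "subspace (fst ` W x0)" using linear_subspace_image[OF lfst] by (simp add: W_def)
      qed
      then obtain w where w: "w \<in> W x0" "fst w = X" using XS by blast
      have "\<xi> - w = (0, a - snd w)" using w(2) Xa by (cases w) simp
      then have "\<xi> - w \<in> W x0" using linW by simp
      then have "w + (\<xi> - w) \<in> W x0" using w(1) unfolding W_def by (rule span_add[rotated])
      then show "\<xi> \<in> W x0" by simp
    qed
    have WWp0: "Wp x0 = W x0" using Wp0 Wsub by blast
    define aa where "aa i x = (\<Sum>c\<in>Basis. (x \<bullet> B2 c (gn i x)) *\<^sub>R c)" for i x
    have aa_eq: "aa i x \<bullet> \<xi> = x \<bullet> B2 \<xi> (gn i x)" for i x \<xi>
      unfolding aa_def by (rule aa_prop[OF B2b])
    have paa: "polynomial_function (aa i)" if "i \<in> I" for i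
      unfolding aa_def
    proof (intro polynomial_function_sum polynomial_function_mult)
      fix c :: "'k \<times> 'v"
      show "polynomial_function (\<lambda>x. x \<bullet> B2 c (gn i x))"
        by (intro poly_inner poly_bilin[OF B2b] pgn[OF that]) auto
    qed auto
    define K where "K x = {y. \<forall>z\<in>span ((\<lambda>i. aa i x) ` I). real_inner_class.orthogonal z y}" for x
    have dimK: "dim (K x) + dim (span ((\<lambda>i. aa i x) ` I)) = dim (UNIV :: ('k \<times> 'v) set)" for x
      using dim_subspace_orthogonal_to_vectors[of "span ((\<lambda>i. aa i x) ` I)" UNIV] by (simp add: K_def)
    have WpK: "Wp x \<subseteq> K x" for x
    proof
      fix y assume y: "y \<in> Wp x"
      show "y \<in> K x"
        unfolding K_def
      proof (intro CollectI ballI)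
        fix z assume z: "z \<in> span ((\<lambda>i. aa i x) ` I)"
        have "real_inner_class.orthogonal y z"
        proof (rule orthogonal_to_span[OF z])
          fix t assume "t \<in> (\<lambda>i. aa i x) ` I"
          then obtain i where i: "i \<in> I" "t = aa i x" by blast
          have "gn i x \<in> W x" using i(1) by (auto simp: Wgn intro: span_base)
          then have "x \<bullet> B2 y (gn i x) = 0" using y by (simp add: Wp_def)
          then show "real_inner_class.orthogonal y t"
            using aa_eq[of i x y] i(2) by (simp add: real_inner_class.orthogonal_def inner_commute)
        qed
        then show "real_inner_class.orthogonal z y" by (simp add: real_inner_class.orthogonal_def inner_commute)
      qed
    qed
    have Kx0: "K x0 \<subseteq> Wp x0"
    proof
      fix y assume y: "y \<in> K x0"
      have "W x0 \<subseteq> {w. x0 \<bullet> B2 y w = 0}"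
        unfolding Wgn
      proof (rule span_minimal)
        show "(\<lambda>i. gn i x0) ` I \<subseteq> {w. x0 \<bullet> B2 y w = 0}"
        proof
          fix w assume "w \<in> (\<lambda>i. gn i x0) ` I"
          then obtain i where i: "i \<in> I" "w = gn i x0" by blast
          have "aa i x0 \<in> span ((\<lambda>i. aa i x0) ` I)" using i(1) by (auto intro: span_base)
          then have "aa i x0 \<bullet> y = 0" using y by (simp add: K_def real_inner_class.orthogonal_def)
          then show "w \<in> {w. x0 \<bullet> B2 y w = 0}" using aa_eq[of i x0 y] i(2) by simp
        qed
        have l: "linear (\<lambda>w. x0 \<bullet> B2 y w)" using bil_inner_comp[OF B2b, of x0] unfolding bilinear_def by blast
        show "subspace {w. x0 \<bullet> B2 y w = 0}"
          unfolding subspace_def by (auto simp: linear_add[OF l] linear_scale[OF l] linear_0[OF l])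
      qed
      then show "y \<in> Wp x0" by (auto simp: Wp_def)
    qed
    obtain p1 :: "'k \<times> 'v \<Rightarrow> real" where p1: "polynomial_function p1" "p1 x0 \<noteq> 0"
      "\<And>x. p1 x \<noteq> 0 \<Longrightarrow> dim (span ((\<lambda>i. gn i x0) ` I)) \<le> dim (span ((\<lambda>i. gn i x) ` I))"
      using rank_lsc[of I gn x0, OF finI pgn] by blast
    obtain p2 :: "'k \<times> 'v \<Rightarrow> real" where p2: "polynomial_function p2" "p2 x0 \<noteq> 0"
      "\<And>x. p2 x \<noteq> 0 \<Longrightarrow> dim (span ((\<lambda>i. aa i x0) ` I)) \<le> dim (span ((\<lambda>i. aa i x) ` I))"
      using rank_lsc[of I aa x0, OF finI paa] by blast
    define P where "P x = p1 x * p2 x" for x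
    have pP: "polynomial_function P" unfolding P_def by (rule poly_times[OF p1(1) p2(1)])
    have P0: "P x0 \<noteq> 0" using p1(2) p2(2) by (simp add: P_def)
    have "maximal_isotropic B2 UNIV x (W x)" if Px: "P x \<noteq> 0" for x
    proof -
      have h1: "dim (W x0) \<le> dim (W x)" using p1(3) Px by (simp add: P_def Wgn)
      have h2: "dim (span ((\<lambda>i. aa i x0) ` I)) \<le> dim (span ((\<lambda>i. aa i x) ` I))" using p2(3) Px by (simp add: P_def)
      have "dim (Wp x) \<le> dim (K x)" using WpK by (rule dim_subset)
      also have "\<dots> \<le> dim (K x0)" using dimK[of x] dimK[of x0] h2 by linarith
      also have "\<dots> \<le> dim (Wp x0)" using Kx0 by (rule dim_subset)
      also have "\<dots> = dim (W x0)" using WWp0 by simp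
      also have "\<dots> \<le> dim (W x)" by (rule h1)
      finally have "dim (Wp x) \<le> dim (W x)" .
      then have WW: "W x = Wp x" using subspace_dim_equal[of "W x" "Wp x"] Wsub sWp by (simp add: W_def)
      show ?thesis
        unfolding maximal_isotropic_def
      proof (intro conjI allI impI)
        show "subspace (W x)" by (simp add: W_def)
        show "W x \<subseteq> UNIV" by simp
        show "isotropic B2 x (W x)" by (rule iso)
        fix U assume U: "subspace U \<and> W x \<subseteq> U \<and> U \<subseteq> UNIV \<and> isotropic B2 x U"
        have "U \<subseteq> Wp x" using U by (auto simp: Wp_def isotropic_def)
        then show "U = W x" using U WW by blast
      qed
    qed
    then show ?thesis unfolding generic_on_def using pP P0 by blast
  qed
  have "complete_comm_set B2 UNIV F"
    unfolding complete_comm_set_def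
  proof (intro conjI ballI)
    show "polynomial_function g" if "g \<in> F" for g using polyF that .
    show "lp_bracket B2 g h x = 0" if "g \<in> F" "h \<in> F" for g h x
      using comm that by (simp add: lp_bracket_def)
    show "generic_on UNIV (\<lambda>x. maximal_isotropic B2 UNIV x (span ((\<lambda>f. grad f x) ` F)))"
      using generic by (simp add: W_def)
  qed
  then show ?thesis by (simp add: B2_def F_def)
qed


end
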